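(* Let $\mathcal{G}=(V,D,B)$ be a mixed graph, and let $C_1,\dots,C_l$ be the vertex sets of the connected components of its bidirected part $\mathcal{G}_\leftrightarrow=(V,\emptyset,B)$. Then $\tau(\mathcal{G})\ge\max_{j=1,\dots,l}|\mathrm{Pa}(C_j)|$. Moreover, if $n<\max_{j}|\mathrm{Pa}(C_j)|$, then $\hat\ell(\mathcal{G}\mid S_{0,n})=\infty$ almost surely.
   Context: A mixed graph is a triple $\mathcal{G}=(V,D,B)$ with $V=\{1,\dots,p\}$, $D\subseteq V\times V$ directed edges $i\to j$ (no self-loops), and $B$ a set of 2-element subsets of $V$ (bidirected edges). $\mathrm{pa}(j)=\{k: k\to j\in D\}$ and $\mathrm{Pa}(A)=A\cup\bigcup_{i\in A}\mathrm{pa}(i)$. $\mathbb{R}^D_{\mathrm{reg}}$ is the set of real $p\times p$ matrices $\Lambda$ with $\lambda_{ij}=0$ whenever $i\to j\notin D$ and $I-\Lambda$ invertible; $PD(B)$ is the set of positive definite $\Omega$ with $\omega_{ij}=0$ for $i\neq j$, $\{i,j\}\notin B$; $PD(\mathcal{G})=\{(I-\Lambda)^{-T}\Omega(I-\Lambda)^{-1}:\Lambda\in\mathbb{R}^D_{\mathrm{reg}},\Omega\in PD(B)\}$. For an i.i.d. sample $X^{(1)},\dots,X^{(n)}$ from an absolutely continuous distribution on $\mathbb{R}^p$, $S_{0,n}=\frac1n\sum_s X^{(s)}(X^{(s)})^T$; $\ell(\Sigma\mid S)=-\log\det\Sigma-\mathrm{trace}(\Sigma^{-1}S)$; $\hat\ell(\mathcal{G}\mid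 S)=\sup_{\Sigma\in PD(\mathcal{G})}\ell(\Sigma\mid S)$; $\tau(\mathcal{G})=\min\{N\in\mathbb{N}:\hat\ell(\mathcal{G}\mid S_{0,n})<\infty\text{ a.s. for all }n\ge N\}$. *)

theory Defs
  imports "HOL-Probability.Probability"
begin

text \<open>Vertices V = {1..p} are modelled by a finite type 'v (p = CARD('v)).
  Directed edges D are pairs (i,j) meaning i -> j; bidirected edges B are 2-element sets.\<close>

definition mixed_graph :: "('v \<times> 'v) set \<Rightarrow> 'v set set \<Rightarrow> bool" where
  "mixed_graph D B \<longleftrightarrow> (\<forall>i. (i, i) \<notin> D) \<and> (\<forall>e\<in>B. card e = 2)"

definition pa :: "('v \<times> 'v) set \<Rightarrow> 'v \<Rightarrow> 'v set" where
  "pa D j = {k. (k, j) \<in> D}"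

definition Pa :: "('v \<times> 'v) set \<Rightarrow> 'v set \<Rightarrow> 'v set" where
  "Pa D A = A \<union> (\<Union>i\<in>A. pa D i)"

definition bidir_rel :: "'v set set \<Rightarrow> ('v \<times> 'v) set" where
  "bidir_rel B = {(i, j). {i, j} \<in> B}"

definition bidir_components :: "'v set set \<Rightarrow> 'v set set" where
  "bidir_components B = UNIV // ((bidir_rel B)\<^sup>*)"

definition pos_def_mat :: "real^'v^'v \<Rightarrow> bool" where
  "pos_def_mat M \<longleftrightarrow> transpose M = M \<and> (\<forall>x. x \<noteq> 0 \<longrightarrow> x \<bullet> (M *v x) > 0)"

definition R_D_reg :: "('v::finite \<times> 'v) set \<Rightarrow> (real^'v^'v) set" where
  "R_D_reg D = {\<Lambda>. (\<forall>i j. (i, j) \<notin> D \<longrightarrow> \<Lambda> $ i $ j = 0) \<and> invertible (mat 1 - \<Lambda>)}"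

definition PD_B :: "'v::finite set set \<Rightarrow> (real^'v^'v) set" where
  "PD_B B = {\<Omega>. pos_def_mat \<Omega> \<and> (\<forall>i j. i \<noteq> j \<and> {i, j} \<notin> B \<longrightarrow> \<Omega> $ i $ j = 0)}"

definition PD_G :: "('v::finite \<times> 'v) set \<Rightarrow> 'v set set \<Rightarrow> (real^'v^'v) set" where
  "PD_G D B = {transpose (matrix_inv (mat 1 - \<Lambda>)) ** \<Omega> ** matrix_inv (mat 1 - \<Lambda>) | \<Lambda> \<Omega>.
      \<Lambda> \<in> R_D_reg D \<and> \<Omega> \<in> PD_B B}"

definition loglik :: "real^'v^'v \<Rightarrow> real^'v^'v \<Rightarrow> real" where
  "loglik \<Sigma> S = - ln (det \<Sigma>) - trace (matrix_inv \<Sigma> ** S)"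

definition loglik_hat :: "('v::finite \<times> 'v) set \<Rightarrow> 'v set set \<Rightarrow> real^'v^'v \<Rightarrow> ereal" where
  "loglik_hat D B S = (SUP \<Sigma>\<in>PD_G D B. ereal (loglik \<Sigma> S))"

definition outer :: "real^'v \<Rightarrow> real^'v^'v" where
  "outer x = (\<chi> i j. x $ i * x $ j)"

definition sample_cov :: "nat \<Rightarrow> (nat \<Rightarrow> real^'v) \<Rightarrow> real^'v^'v" where
  "sample_cov n X = (1 / real n) *\<^sub>R (\<Sum>s<n. outer (X s))"

definition iid_sample :: "nat \<Rightarrow> 'a measure \<Rightarrow> (nat \<Rightarrow> 'a) measure" where
  "iid_sample n P = PiM {..<n} (\<lambda>_. P)"

text \<open>The set of N in the definition of tau: N \<ge> 1 and for all n \<ge> N, the MLE is finite a.s.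
  tau(G) is its minimum.\<close>
definition tau_set :: "('v::finite \<times> 'v) set \<Rightarrow> 'v set set \<Rightarrow> (real^'v) measure \<Rightarrow> nat set" where
  "tau_set D B P = {N. N \<ge> 1 \<and> (\<forall>n\<ge>N. AE X in iid_sample n P. loglik_hat D B (sample_cov n X) < \<infinity>)}"

end

theory Submission
  imports Defs
begin


lemma matrix_inv_eq:
  fixes A B :: "real^'n^'n"
  assumes "A ** B = mat 1" "B ** A = mat 1"
  shows "matrix_inv A = B"
proof -
  have ex: "\<exists>A'. A ** A' = mat 1 \<and> A' ** A = mat 1" using assms by blast
  define A' where "A' = matrix_inv A"
  have h: "A ** A' = mat 1 \<and> A' ** A = mat 1"
    unfolding A'_def matrix_inv_def by (rule someI_ex[OF ex])
  have "A' = A' ** (A ** B)" using assms by (simp add: matrix_mul_rid)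
  also have "\<dots> = (A' ** A) ** B" by (simp add: matrix_mul_assoc)
  also have "\<dots> = B" using h by (simp add: matrix_mul_lid)
  finally show ?thesis unfolding A'_def .
qed

lemma matrix_inv_props:
  fixes A :: "real^'n^'n"
  assumes "invertible A"
  shows "A ** matrix_inv A = mat 1" "matrix_inv A ** A = mat 1"
proof -
  have ex: "\<exists>A'. A ** A' = mat 1 \<and> A' ** A = mat 1" using assms unfolding invertible_def by blast
  have "A ** matrix_inv A = mat 1 \<and> matrix_inv A ** A = mat 1"
    unfolding matrix_inv_def by (rule someI_ex[OF ex])
  then show "A ** matrix_inv A = mat 1" "matrix_inv A ** A = mat 1" by auto
qed

lemma continuous_on_det:
  fixes F :: "real \<Rightarrow> real^'n^'n"
  assumes "\<And>i j. continuous_on S (\<lambda>t. F t $ i $ j)"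
  shows "continuous_on S (\<lambda>t. det (F t))"
  unfolding det_def
  by (intro continuous_on_sum continuous_on_mult continuous_on_const continuous_on_prod assms)

lemma pd_inj:
  fixes M :: "real^'n^'n"
  assumes "pos_def_mat M"
  shows "inj ((*v) M)"
proof (rule injI)
  fix x y assume "M *v x = M *v y"
  then have "M *v (x - y) = 0" by (simp add: matrix_vector_mult_diff_distrib)
  then have "(x - y) \<bullet> (M *v (x - y)) = 0" by simp
  then show "x = y" using assms unfolding pos_def_mat_def by (metis less_irrefl right_minus_eq)
qed

lemma pd_det_nz:
  fixes M :: "real^'n^'n"
  assumes "pos_def_mat M"
  shows "det M \<noteq> 0"
  using det_nz_iff_inj[of "(*v) M"] pd_inj[OF assms] matrix_vector_mul_linear
  by (simp add: matrix_of_matrix_vector_mul)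

lemma pd_invertible:
  fixes M :: "real^'n^'n"
  assumes "pos_def_mat M"
  shows "invertible M"
  using pd_det_nz[OF assms] invertible_det_nz by blast

lemma scaleR_mat_vec: "((c::real) *\<^sub>R (A::real^'n^'m)) *v x = c *\<^sub>R (A *v x)"
  by (simp add: vec_eq_iff matrix_vector_mult_def sum_distrib_left mult_ac)

lemma pd_det_pos:
  fixes M :: "real^'n^'n"
  assumes pd: "pos_def_mat M"
  shows "det M > 0"
proof (rule ccontr)
  assume "\<not> det M > 0"
  then have le: "det M \<le> 0" by simp
  define F where "F = (\<lambda>s::real. (1 - s) *\<^sub>R (mat 1 :: real^'n^'n) + s *\<^sub>R M)"
  have cont: "continuous_on {0..1} (\<lambda>s. det (F s))"
    by (rule continuous_on_det) (auto simp: F_def intro!: continuous_intros)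
  have "\<exists>s\<ge>0. s \<le> 1 \<and> det (F s) = 0"
    by (rule IVT2'[OF _ _ _ cont]) (auto simp: F_def le)
  then obtain s where s: "0 \<le> s" "s \<le> 1" "det (F s) = 0" by blast
  have "pos_def_mat (F s)"
    unfolding pos_def_mat_def
  proof (intro conjI allI impI)
    show "transpose (F s) = F s"
      using pd unfolding pos_def_mat_def F_def
      by (simp add: transpose_def vec_eq_iff mat_def)
  next
    fix x :: "real^'n" assume "x \<noteq> 0"
    have eq: "x \<bullet> (F s *v x) = (1 - s) * (x \<bullet> x) + s * (x \<bullet> (M *v x))"
      unfolding F_def by (simp add: matrix_vector_mult_add_rdistrib scaleR_mat_vec inner_add_right)
    have "x \<bullet> x > 0" using \<open>x \<noteq> 0\<close> by simp
    moreover have "x \<bullet> (M *v x) > 0" using pd \<open>x \<noteq> 0\<close> unfolding pos_def_mat_def by blast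
    ultimately have a: "(1 - s) * (x \<bullet> x) \<ge> 0" "s * (x \<bullet> (M *v x)) \<ge> 0"
      "(1 - s) * (x \<bullet> x) > 0 \<or> s * (x \<bullet> (M *v x)) > 0"
      using s by (simp_all add: mult_nonneg_nonneg) (cases "s = 1", simp_all)
    show "x \<bullet> (F s *v x) > 0" unfolding eq using a by linarith
  qed
  then show False using pd_det_nz s(3) by blast
qed


lemma dot_mat_comm:
  fixes M :: "real^'n^'n"
  shows "x \<bullet> (M *v y) = (transpose M *v x) \<bullet> y"
proof -
  have "x \<bullet> (M *v y) = (\<Sum>i\<in>UNIV. \<Sum>j\<in>UNIV. x$i * M$i$j * y$j)"
    unfolding inner_vec_def matrix_vector_mult_def by (simp add: sum_distrib_left mult.assoc)
  also have "\<dots> = (\<Sum>j\<in>UNIV. \<Sum>i\<in>UNIV. x$i * M$i$j * y$j)" by (rule sum.swap)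
  also have "\<dots> = (transpose M *v x) \<bullet> y"
    unfolding inner_vec_def matrix_vector_mult_def transpose_def by (simp add: sum_distrib_left mult_ac)
  finally show ?thesis .
qed

lemma trace_outer:
  fixes K :: "real^'n^'n"
  shows "trace (K ** outer x) = x \<bullet> (K *v x)"
  unfolding trace_def outer_def matrix_matrix_mult_def inner_vec_def matrix_vector_mult_def
  by (simp add: sum_distrib_left mult_ac)

lemma trace_mul_entries:
  fixes K :: "real^'n^'n"
  shows "trace (K ** B) = (\<Sum>i\<in>UNIV. \<Sum>j\<in>UNIV. K$i$j * B$j$i)"
  unfolding trace_def matrix_matrix_mult_def by simp

lemma trace_sum_scale:
  fixes K :: "real^'n^'n"
  assumes "finite S"
  shows "trace (K ** (c *\<^sub>R (\<Sum>s\<in>S. A s))) = c * (\<Sum>s\<in>S. trace (K ** A s))"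
proof -
  have "trace (K ** (c *\<^sub>R (\<Sum>s\<in>S. A s))) = (\<Sum>i\<in>UNIV. \<Sum>j\<in>UNIV. \<Sum>s\<in>S. c * (K$i$j * A s$j$i))"
    unfolding trace_mul_entries by (simp add: sum_component sum_distrib_left mult_ac)
  also have "\<dots> = (\<Sum>i\<in>UNIV. \<Sum>s\<in>S. \<Sum>j\<in>UNIV. c * (K$i$j * A s$j$i))"
    by (rule sum.cong[OF refl], rule sum.swap)
  also have "\<dots> = (\<Sum>s\<in>S. \<Sum>i\<in>UNIV. \<Sum>j\<in>UNIV. c * (K$i$j * A s$j$i))"
    by (rule sum.swap)
  also have "\<dots> = c * (\<Sum>s\<in>S. trace (K ** A s))"
    unfolding trace_mul_entries by (simp add: sum_distrib_left)
  finally show ?thesis .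
qed

lemma trace_sample_cov:
  fixes K :: "real^'n^'n"
  shows "trace (K ** sample_cov n X) = (1 / real n) * (\<Sum>s<n. X s \<bullet> (K *v X s))"
  unfolding sample_cov_def trace_sum_scale[OF finite_lessThan] trace_outer ..


lemma outer_mv: "outer u *v y = (u \<bullet> y) *\<^sub>R u"
  unfolding outer_def matrix_vector_mult_def inner_vec_def
  by (simp add: vec_eq_iff sum_distrib_left mult_ac)

lemma quad_outer: "x \<bullet> (outer u *v y) = (u \<bullet> x) * (u \<bullet> y)"
  unfolding outer_mv by (simp add: inner_commute)

lemma sum_mv:
  fixes A :: "'s \<Rightarrow> real^'n^'m"
  assumes "finite S"
  shows "(\<Sum>s\<in>S. A s) *v y = (\<Sum>s\<in>S. A s *v y)"
  using assms by (induction S rule: finite_induct) (simp_all add: matrix_vector_mult_add_rdistrib)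

lemma transpose_outer: "transpose (outer u) = outer u"
  unfolding outer_def transpose_def by (simp add: vec_eq_iff mult.commute)

lemma transpose_sum:
  fixes A :: "'s \<Rightarrow> real^'n^'n"
  shows "transpose (\<Sum>s\<in>S. A s) = (\<Sum>s\<in>S. transpose (A s))"
  unfolding transpose_def by (simp add: vec_eq_iff sum_component)

lemma mm_add_r: "((A::real^'n^'m) + B) ** (C::real^'k^'n) = A ** C + B ** C"
  by (simp add: vec_eq_iff matrix_matrix_mult_def sum.distrib distrib_right)
lemma mm_sub_r: "((A::real^'n^'m) - B) ** (C::real^'k^'n) = A ** C - B ** C"
  by (simp add: vec_eq_iff matrix_matrix_mult_def sum_subtractf left_diff_distrib)
lemma mm_sub_l: "(A::real^'n^'m) ** ((B::real^'k^'n) - C) = A ** B - A ** C"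
  by (simp add: vec_eq_iff matrix_matrix_mult_def sum_subtractf right_diff_distrib)

lemma range_sym:
  fixes M :: "real^'n^'n"
  assumes sym: "transpose M = M" and orth: "\<And>x. M *v x = 0 \<Longrightarrow> z \<bullet> x = 0"
  shows "\<exists>y. M *v y = z"
proof -
  let ?S = "range ((*v) M)"
  have sub: "subspace ?S"
    by (rule linear_subspace_image[OF matrix_vector_mul_linear subspace_UNIV])
  obtain p q where p: "p \<in> span ?S" and q: "\<And>w. w \<in> span ?S \<Longrightarrow> orthogonal q w" and z: "z = p + q"
    by (rule orthogonal_subspace_decomp_exists[of ?S z]) blast
  have "orthogonal q (M *v (M *v q))" by (rule q) (simp add: span_base)
  then have "q \<bullet> (M *v (M *v q)) = 0" by (simp add: orthogonal_def)
  then have "(M *v q) \<bullet> (M *v q) = 0" using dot_mat_comm[of q M "M *v q"] sym by simp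
  then have Mq: "M *v q = 0" by simp
  have "z \<bullet> q = 0" by (rule orth[OF Mq])
  moreover have "p \<bullet> q = 0" using q[OF p] by (simp add: orthogonal_def inner_commute)
  ultimately have "q \<bullet> q = 0" unfolding z by (simp add: inner_add_left)
  then have "q = 0" by simp
  then have "z \<in> ?S" using p z span_subspace[OF order_refl span_superset sub] by simp
  then show ?thesis by auto
qed


locale unb =
  fixes D :: "('v::finite \<times> 'v) set" and B :: "'v set set" and C :: "'v set"
    and \<alpha> :: "'v \<Rightarrow> real" and n :: nat and X :: "nat \<Rightarrow> real^'v"
  assumes comp: "C \<in> bidir_components B"
    and anz: "\<And>j. j \<in> C \<Longrightarrow> \<alpha> j \<noteq> 0"
    and azero: "\<And>j. j \<notin> Pa D C \<Longrightarrow> \<alpha> j = 0"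
    and rel: "\<And>s. s < n \<Longrightarrow> (\<chi> l. \<alpha> l) \<bullet> X s = 0"
begin

definition "av = (\<chi> l. \<alpha> l)"
definition "atv = (\<chi> l. if l \<in> C then \<alpha> l else 0)"
definition "AA = Pa D C - C"
definition "ch k = (SOME j. j \<in> C \<and> (k, j) \<in> D)"
definition "Lam = (\<chi> k j. if k \<in> AA \<and> j = ch k then - \<alpha> k / \<alpha> j else 0)"
definition "NN = mat 1 - Lam"

lemma ch: "k \<in> AA \<Longrightarrow> ch k \<in> C \<and> (k, ch k) \<in> D"
proof -
  assume "k \<in> AA"
  then obtain i where "i \<in> C" "k \<in> pa D i" unfolding AA_def Pa_def by auto
  then have "\<exists>j. j \<in> C \<and> (k, j) \<in> D" unfolding pa_def by auto
  then show ?thesis unfolding ch_def by (rule someI_ex)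
qed

lemma AA_C: "k \<in> AA \<Longrightarrow> k \<notin> C" unfolding AA_def by auto

lemma Lam_nz: "Lam $ k $ j \<noteq> 0 \<Longrightarrow> k \<in> AA \<and> j = ch k"
  unfolding Lam_def by (auto split: if_splits)

lemma LamLam: "Lam ** Lam = mat 0"
proof -
  have z: "Lam $ i $ c * Lam $ c $ j = 0" for i c j
  proof (rule ccontr)
    assume "Lam $ i $ c * Lam $ c $ j \<noteq> 0"
    then have "Lam $ i $ c \<noteq> 0" "Lam $ c $ j \<noteq> 0" by auto
    then have "c = ch i" "i \<in> AA" "c \<in> AA" using Lam_nz by blast+
    then show False using ch AA_C by blast
  qed
  have "(\<Sum>c\<in>UNIV. Lam $ i $ c * Lam $ c $ j) = 0" for i j by (rule sum.neutral) (simp add: z)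
  then show ?thesis unfolding matrix_matrix_mult_def by (simp add: vec_eq_iff mat_def)
qed

lemma NN_inv: "NN ** (mat 1 + Lam) = mat 1" "(mat 1 + Lam) ** NN = mat 1"
  unfolding NN_def by (simp_all add: matrix_add_ldistrib mm_add_r mm_sub_l
      mm_sub_r LamLam matrix_mul_lid matrix_mul_rid)

lemma NN_invertible: "invertible NN"
  unfolding invertible_def using NN_inv by blast

lemma matrix_inv_NN: "matrix_inv NN = mat 1 + Lam"
  by (rule matrix_inv_eq) (rule NN_inv)+

lemma Lam_R: "Lam \<in> R_D_reg D"
  unfolding R_D_reg_def
proof (intro CollectI conjI allI impI)
  fix i j assume "(i, j) \<notin> D"
  then show "Lam $ i $ j = 0" using Lam_nz ch by blast
next
  show "invertible (mat 1 - Lam)" using NN_invertible unfolding NN_def .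
qed

lemma NN_at: "NN *v atv = av"
proof -
  have "(Lam *v atv) $ k = (if k \<in> AA then - \<alpha> k else 0)" for k
  proof (cases "k \<in> AA")
    case True
    have e: "Lam $ k $ j * atv $ j = (if j = ch k then - \<alpha> k else 0)" for j
      using ch[OF True] anz[of "ch k"] True unfolding Lam_def atv_def by auto
    show ?thesis unfolding matrix_vector_mult_def using True by (simp add: e)
  next
    case False
    then have "Lam $ k $ j = 0" for j using Lam_nz by blast
    then show ?thesis using False unfolding matrix_vector_mult_def by simp
  qed
  then show ?thesis
    unfolding NN_def av_def
    by (auto simp: vec_eq_iff matrix_vector_mult_diff_rdistrib atv_def AA_def azero)
qed

end


context unb begin

definition "RR = {(a, b). {a, b} \<in> B \<and> a \<in> C \<and> b \<in> C}"
definition "u a b = (\<chi> i. (if i = a then \<alpha> b else 0) - (if i = b then \<alpha> a else 0))"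
definition "Sst = (\<Sum>(a, b)\<in>RR. outer (u a b))"
definition "dg t = (\<chi> i j. if i = j then (if i \<in> C then t else 1) else (0::real))"
definition "Om t = dg t + Sst"
definition "PP v = v \<bullet> (Sst *v v)"

lemma finite_RR: "finite RR" by (rule finite_subset[of _ UNIV]) auto

lemma Sst_quad: "x \<bullet> (Sst *v y) = (\<Sum>(a, b)\<in>RR. (u a b \<bullet> x) * (u a b \<bullet> y))"
  unfolding Sst_def by (simp add: sum_mv[OF finite_RR] inner_sum_right quad_outer case_prod_beta)

lemma PP_nonneg: "PP v \<ge> 0"
  unfolding PP_def Sst_quad by (auto intro!: sum_nonneg)

lemma Sst_sym: "transpose Sst = Sst"
  unfolding Sst_def by (simp add: transpose_sum transpose_outer case_prod_beta)

lemma dg_quad: "x \<bullet> (dg t *v y) = (\<Sum>i\<in>UNIV. (if i \<in> C then t else 1) * x$i * y$i)"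
proof -
  have e: "dg t $ i $ j * y $ j = (if j = i then (if i \<in> C then t else 1) * y $ i else 0)" for i j
    unfolding dg_def by simp
  have "(dg t *v y) $ i = (if i \<in> C then t else 1) * y $ i" for i
    unfolding matrix_vector_mult_def by (simp add: e)
  then show ?thesis unfolding inner_vec_def by (simp add: mult_ac)
qed

lemma dg_sym: "transpose (dg t) = dg t"
  unfolding dg_def transpose_def by (simp add: vec_eq_iff)

lemma Om_sym: "transpose (Om t) = Om t"
  unfolding Om_def using dg_sym Sst_sym by (simp add: transpose_def vec_eq_iff)

lemma Om_quad: "x \<bullet> (Om t *v x) = (\<Sum>i\<in>UNIV. (if i \<in> C then t else 1) * x$i * x$i) + PP x"
  unfolding Om_def PP_def by (simp add: matrix_vector_mult_add_rdistrib inner_add_right dg_quad)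

lemma Sst_entry: "Sst $ i $ j = (\<Sum>(a, b)\<in>RR. u a b $ i * u a b $ j)"
  unfolding Sst_def by (simp add: sum_component outer_def case_prod_beta)

lemma u_nz: "u a b $ i \<noteq> 0 \<Longrightarrow> i = a \<or> i = b"
  unfolding u_def by (auto split: if_splits)

lemma Om_pd: assumes t: "t > 0" shows "Om t \<in> PD_B B"
  unfolding PD_B_def pos_def_mat_def
proof (intro CollectI conjI allI impI)
  show "transpose (Om t) = Om t" by (rule Om_sym)
next
  fix x :: "real^'v" assume "x \<noteq> 0"
  then obtain i where i: "x $ i \<noteq> 0" by (auto simp: vec_eq_iff)
  have "0 < (\<Sum>i\<in>UNIV. (if i \<in> C then t else 1) * x$i * x$i)"
  proof -
    have sq: "x$i * x$i > 0" using i by (metis mult_pos_pos mult_neg_neg linorder_neqE_linordered_idom)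
    have p1: "0 < (if i \<in> C then t else 1) * x$i * x$i" using t sq by (simp add: mult.assoc)
    have p2: "0 \<le> (if k \<in> C then t else 1) * x$k * x$k" for k using t by (simp add: mult.assoc)
    show ?thesis by (rule sum_pos2[of UNIV i]) (use p1 p2 in auto)
  qed
  then show "x \<bullet> (Om t *v x) > 0" unfolding Om_quad using PP_nonneg[of x] by linarith
next
  fix i j assume ij: "i \<noteq> j \<and> {i, j} \<notin> B"
  have "u a b $ i * u a b $ j = 0" if "(a, b) \<in> RR" for a b
  proof (rule ccontr)
    assume "u a b $ i * u a b $ j \<noteq> 0"
    then have "i = a \<or> i = b" "j = a \<or> j = b" using u_nz by auto
    moreover have "{a, b} \<in> B" using that unfolding RR_def by auto
    ultimately show False using ij by (auto simp: insert_commute)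
  qed
  then have "Sst $ i $ j = 0" unfolding Sst_entry by (intro sum.neutral) auto
  then show "Om t $ i $ j = 0" unfolding Om_def dg_def using ij by simp
qed

lemma u_dot: "u a b \<bullet> x = \<alpha> b * x $ a - \<alpha> a * x $ b"
proof -
  have e: "u a b $ i * x $ i = (if i = a then \<alpha> b * x$a else 0) - (if i = b then \<alpha> a * x $ b else 0)" for i
    unfolding u_def by (simp add: left_diff_distrib)
  show ?thesis unfolding inner_vec_def by (simp add: e sum_subtractf)
qed

lemma C_ex: "\<exists>c0. C = ((bidir_rel B)\<^sup>*) `` {c0}"
  using comp unfolding bidir_components_def quotient_def by auto

lemma C_ne: "C \<noteq> {}"
  using C_ex by auto

lemma Om0_at: "Om 0 *v atv = 0"
proof -
  have "u a b \<bullet> atv = 0" if "(a, b) \<in> RR" for a b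
    using that unfolding u_dot RR_def atv_def by (simp add: mult.commute)
  then have "Sst *v atv = 0"
    unfolding Sst_def by (simp add: sum_mv[OF finite_RR] outer_mv case_prod_beta)
  moreover have "dg 0 *v atv = 0"
  proof -
    have z: "dg 0 $ i $ j * atv $ j = 0" for i j unfolding dg_def atv_def by simp
    have "(\<Sum>j\<in>UNIV. dg 0 $ i $ j * atv $ j) = 0" for i by (rule sum.neutral) (simp add: z)
    then show ?thesis unfolding matrix_vector_mult_def by (simp add: vec_eq_iff)
  qed
  ultimately show ?thesis unfolding Om_def by (simp add: matrix_vector_mult_add_rdistrib)
qed

lemma det_Om0: "det (Om 0) = 0"
proof (rule ccontr)
  assume "det (Om 0) \<noteq> 0"
  then have "inj ((*v) (Om 0))"
    using det_nz_iff_inj[of "(*v) (Om 0)"] matrix_vector_mul_linear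
    by (simp add: matrix_of_matrix_vector_mul)
  moreover have "Om 0 *v atv = Om 0 *v 0" using Om0_at by simp
  ultimately have "atv = 0" by (rule injD)
  moreover obtain j where "j \<in> C" using C_ne by auto
  ultimately have "atv $ j = 0" "j \<in> C" by auto
  then show False using anz[of j] unfolding atv_def by simp
qed

lemma Om_cont: "continuous_on S (\<lambda>t. det (Om t))"
proof (rule continuous_on_det)
  fix i j
  show "continuous_on S (\<lambda>t. Om t $ i $ j)"
    by (cases "i = j"; cases "i \<in> C") (simp_all add: Om_def dg_def continuous_intros)
qed

lemma ker_u: assumes "Sst *v x = 0" "(a, b) \<in> RR" shows "u a b \<bullet> x = 0"
proof -
  have "(\<Sum>(a, b)\<in>RR. (u a b \<bullet> x) * (u a b \<bullet> x)) = 0"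
    using assms(1) Sst_quad[of x x] by simp
  then have "\<forall>p\<in>RR. (case p of (a, b) \<Rightarrow> (u a b \<bullet> x) * (u a b \<bullet> x)) = 0"
    by (subst sum_nonneg_eq_0_iff[symmetric]) (auto simp: finite_RR)
  then show ?thesis using assms(2) by auto
qed

lemma ker_C:
  assumes x: "Sst *v x = 0" and C: "C = ((bidir_rel B)\<^sup>*) `` {c0}" and j: "j \<in> C"
  shows "x $ j * \<alpha> c0 = x $ c0 * \<alpha> j"
proof -
  have "(c0, j) \<in> (bidir_rel B)\<^sup>*" using j C by auto
  then show ?thesis
  proof (induction rule: rtrancl_induct)
    case base then show ?case by simp
  next
    case (step j' j)
    have j'C: "j' \<in> C" using step(1) C by auto
    have jC: "j \<in> C" using step(1,2) C by (auto intro: rtrancl_into_rtrancl)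
    have "{j', j} \<in> B" using step(2) unfolding bidir_rel_def by auto
    then have "(j', j) \<in> RR" using j'C jC unfolding RR_def by auto
    then have e: "\<alpha> j * x $ j' = \<alpha> j' * x $ j" using ker_u[OF x] u_dot by simp
    have "x $ j * \<alpha> c0 * \<alpha> j' = \<alpha> j * (x $ j' * \<alpha> c0)" using e by (simp add: mult_ac)
    also have "\<dots> = x $ c0 * \<alpha> j * \<alpha> j'" using step(3) by (simp add: mult_ac)
    finally show ?case using anz[OF j'C] by simp
  qed
qed

lemma range_Sst:
  assumes supp: "\<And>i. i \<notin> C \<Longrightarrow> z $ i = 0" and orth: "z \<bullet> atv = 0"
  shows "\<exists>y. Sst *v y = z"
proof (rule range_sym[OF Sst_sym])
  fix x assume x: "Sst *v x = 0"
  obtain c0 where C: "C = ((bidir_rel B)\<^sup>*) `` {c0}" using C_ex by auto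
  have c0: "c0 \<in> C" using C by auto
  have "z $ i * x $ i = (x $ c0 / \<alpha> c0) * (z $ i * atv $ i)" for i
  proof (cases "i \<in> C")
    case True
    then show ?thesis using ker_C[OF x C True] anz[OF c0] unfolding atv_def
      by (simp add: field_simps)
  qed (simp add: supp)
  then have "z \<bullet> x = (x $ c0 / \<alpha> c0) * (z \<bullet> atv)"
    unfolding inner_vec_def by (simp add: sum_distrib_left)
  then show "z \<bullet> x = 0" using orth by simp
qed

end


context unb begin

definition "eps s = transpose NN *v X s"
definition "zc s = (\<chi> j. if j \<in> C then eps s $ j else 0)"
definition "ac s = eps s - zc s"
definition "yy s = (SOME y. Sst *v y = zc s)"
definition "Bd = (1 / real n) * (\<Sum>s<n. (\<Sum>i\<in>UNIV. ac s $ i * ac s $ i) + PP (yy s))"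

lemma eps_at: "s < n \<Longrightarrow> atv \<bullet> eps s = 0"
  unfolding eps_def dot_mat_comm[of atv "transpose NN"] transpose_transpose NN_at
  using rel unfolding av_def by simp

lemma zc_at: "s < n \<Longrightarrow> zc s \<bullet> atv = 0"
proof -
  assume s: "s < n"
  have "zc s \<bullet> atv = eps s \<bullet> atv"
    unfolding inner_vec_def by (rule sum.cong) (auto simp: zc_def atv_def)
  then show ?thesis using eps_at[OF s] by (simp add: inner_commute)
qed

lemma yy: "s < n \<Longrightarrow> Sst *v yy s = zc s"
proof -
  assume s: "s < n"
  have "\<exists>y. Sst *v y = zc s"
  proof (rule range_Sst)
    show "zc s \<bullet> atv = 0" by (rule zc_at[OF s])
  qed (simp add: zc_def)
  then show ?thesis unfolding yy_def by (rule someI_ex)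
qed

lemma ac_C: "i \<in> C \<Longrightarrow> ac s $ i = 0"
  unfolding ac_def zc_def by simp

lemma Om_inv: "t > 0 \<Longrightarrow> Om t *v (matrix_inv (Om t) *v e) = e"
proof -
  assume t: "t > 0"
  have "invertible (Om t)" using Om_pd[OF t] unfolding PD_B_def by (auto intro: pd_invertible)
  then show ?thesis using matrix_inv_props(1)[of "Om t"] by (simp add: matrix_vector_mul_assoc)
qed

lemma PP_sub: "PP (y - w) = PP y - 2 * (y \<bullet> (Sst *v w)) + PP w"
proof -
  have "w \<bullet> (Sst *v y) = y \<bullet> (Sst *v w)"
    using dot_mat_comm[of w Sst y] Sst_sym by (simp add: inner_commute)
  then show ?thesis unfolding PP_def
    by (simp add: matrix_vector_mult_diff_distrib inner_diff_left inner_diff_right)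
qed

lemma quad_bound:
  assumes t: "t > 0" and a: "\<And>i. i \<in> C \<Longrightarrow> a $ i = 0"
  shows "(a + Sst *v y) \<bullet> (matrix_inv (Om t) *v (a + Sst *v y))
     \<le> (\<Sum>i\<in>UNIV. a $ i * a $ i) + PP y"
proof -
  define e where "e = a + Sst *v y"
  define w where "w = matrix_inv (Om t) *v e"
  have Ow: "Om t *v w = e" unfolding w_def by (rule Om_inv[OF t])
  define G where "G = (\<Sum>i\<in>UNIV. (if i \<in> C then 0 else 1) * w$i * w$i)"
  have "e \<bullet> w = w \<bullet> (Om t *v w)" using Ow by (simp add: inner_commute)
  also have "\<dots> = (\<Sum>i\<in>UNIV. (if i \<in> C then t else 1) * w$i * w$i) + PP w" by (rule Om_quad)
  finally have e1: "e \<bullet> w = (\<Sum>i\<in>UNIV. (if i \<in> C then t else 1) * w$i * w$i) + PP w" .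
  have "G \<le> (\<Sum>i\<in>UNIV. (if i \<in> C then t else 1) * w$i * w$i)"
    unfolding G_def by (rule sum_mono) (use t in \<open>auto simp: mult.assoc\<close>)
  then have lo: "G + PP w \<le> e \<bullet> w" using e1 by linarith
  have "a \<bullet> w \<le> (\<Sum>i\<in>UNIV. (a$i * a$i + (if i \<in> C then 0 else 1) * w$i * w$i) / 2)"
    unfolding inner_vec_def
  proof (rule sum_mono)
    fix i :: 'v
    show "a $ i \<bullet> w $ i \<le> (a$i * a$i + (if i \<in> C then 0 else 1) * w$i * w$i) / 2"
    proof (cases "i \<in> C")
      case True then show ?thesis using a by simp
    next
      case False
      have "0 \<le> (a$i - w$i) * (a$i - w$i)" by simp
      then show ?thesis using False by (simp add: algebra_simps)
    qed
  qed
  also have "\<dots> = ((\<Sum>i\<in>UNIV. a $ i * a $ i) + G) / 2"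
    unfolding G_def by (simp add: sum_divide_distrib[symmetric] sum.distrib)
  finally have aw: "a \<bullet> w \<le> ((\<Sum>i\<in>UNIV. a $ i * a $ i) + G) / 2" .
  have "(Sst *v y) \<bullet> w = y \<bullet> (Sst *v w)"
    using dot_mat_comm[of w Sst y] Sst_sym by (simp add: inner_commute)
  moreover have "2 * (y \<bullet> (Sst *v w)) \<le> PP y + PP w" using PP_nonneg[of "y - w"] PP_sub by simp
  ultimately have zw: "(Sst *v y) \<bullet> w \<le> (PP y + PP w) / 2" by simp
  have "e \<bullet> w = a \<bullet> w + (Sst *v y) \<bullet> w" unfolding e_def by (simp add: inner_add_left)
  moreover have "\<And>E AW ZW A Gg PY PW. E = AW + ZW \<Longrightarrow> AW \<le> (A + Gg) / 2 \<Longrightarrow> ZW \<le> (PY + PW) / 2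
      \<Longrightarrow> Gg + PW \<le> E \<Longrightarrow> E \<le> A + (PY::real)" by argo
  ultimately have "e \<bullet> w \<le> (\<Sum>i\<in>UNIV. a $ i * a $ i) + PP y" using aw zw lo by blast
  then show ?thesis unfolding e_def w_def .
qed

definition "Sig t = transpose (matrix_inv NN) ** Om t ** matrix_inv NN"

lemma Sig_PD: "t > 0 \<Longrightarrow> Sig t \<in> PD_G D B"
  unfolding PD_G_def Sig_def NN_def using Lam_R Om_pd by blast

lemma inv_Sig: assumes t: "t > 0"
  shows "matrix_inv (Sig t) = NN ** matrix_inv (Om t) ** transpose NN"
proof -
  have iO: "invertible (Om t)" using Om_pd[OF t] unfolding PD_B_def by (auto intro: pd_invertible)
  note O1 = matrix_inv_props(1)[OF iO] and O2 = matrix_inv_props(2)[OF iO]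
  note N1 = matrix_inv_props(1)[OF NN_invertible] and N2 = matrix_inv_props(2)[OF NN_invertible]
  have T1: "transpose (matrix_inv NN) ** transpose NN = mat 1"
    using N1 by (metis matrix_transpose_mul transpose_mat)
  have T2: "transpose NN ** transpose (matrix_inv NN) = mat 1"
    using N2 by (metis matrix_transpose_mul transpose_mat)
  show ?thesis
  proof (rule matrix_inv_eq)
    have "Sig t ** (NN ** matrix_inv (Om t) ** transpose NN)
      = transpose (matrix_inv NN) ** Om t ** (matrix_inv NN ** NN) ** matrix_inv (Om t) ** transpose NN"
      unfolding Sig_def by (simp add: matrix_mul_assoc)
    also have "\<dots> = transpose (matrix_inv NN) ** (Om t ** matrix_inv (Om t)) ** transpose NN"
      using N2 by (simp add: matrix_mul_assoc)
    also have "\<dots> = mat 1" using O1 T1 by simp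
    finally show "Sig t ** (NN ** matrix_inv (Om t) ** transpose NN) = mat 1" .
  next
    have "NN ** matrix_inv (Om t) ** transpose NN ** Sig t
      = NN ** matrix_inv (Om t) ** (transpose NN ** transpose (matrix_inv NN)) ** Om t ** matrix_inv NN"
      unfolding Sig_def by (simp add: matrix_mul_assoc)
    also have "\<dots> = NN ** (matrix_inv (Om t) ** Om t) ** matrix_inv NN"
      using T2 by (simp add: matrix_mul_assoc)
    also have "\<dots> = mat 1" using O2 N1 by simp
    finally show "NN ** matrix_inv (Om t) ** transpose NN ** Sig t = mat 1" .
  qed
qed

lemma trace_bound: assumes t: "t > 0"
  shows "trace (matrix_inv (Sig t) ** sample_cov n X) \<le> Bd"
proof -
  have q: "X s \<bullet> ((NN ** matrix_inv (Om t) ** transpose NN) *v X s)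
      = eps s \<bullet> (matrix_inv (Om t) *v eps s)" for s
    unfolding eps_def
    by (simp add: matrix_vector_mul_assoc[symmetric] dot_mat_comm[of "X s" NN])
  have b: "eps s \<bullet> (matrix_inv (Om t) *v eps s) \<le> (\<Sum>i\<in>UNIV. ac s $ i * ac s $ i) + PP (yy s)"
    if s: "s < n" for s
  proof -
    have "eps s = ac s + Sst *v yy s" unfolding ac_def yy[OF s] by simp
    then show ?thesis using quad_bound[OF t, of "ac s" "yy s"] ac_C by simp
  qed
  have "trace (matrix_inv (Sig t) ** sample_cov n X)
     = (1 / real n) * (\<Sum>s<n. eps s \<bullet> (matrix_inv (Om t) *v eps s))"
    unfolding trace_sample_cov inv_Sig[OF t] q ..
  also have "\<dots> \<le> Bd" unfolding Bd_def
    by (rule mult_left_mono) (auto intro!: sum_mono b)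
  finally show ?thesis .
qed

lemma det_Sig: "det (Sig t) = (det (matrix_inv NN))\<^sup>2 * det (Om t)"
  unfolding Sig_def by (simp add: det_mul power2_eq_square)

lemma dN: "(det (matrix_inv NN))\<^sup>2 > 0"
proof -
  have "det (matrix_inv NN) * det NN = 1"
    using matrix_inv_props(2)[OF NN_invertible] det_mul[of "matrix_inv NN" NN] by simp
  then have "det (matrix_inv NN) \<noteq> 0" by auto
  then show ?thesis by simp
qed

lemma loglik_lower: assumes t: "t > 0"
  shows "loglik (Sig t) (sample_cov n X) \<ge> - ln ((det (matrix_inv NN))\<^sup>2) - ln (det (Om t)) - Bd"
proof -
  have dO: "det (Om t) > 0" using Om_pd[OF t] unfolding PD_B_def by (auto intro: pd_det_pos)
  have "ln (det (Sig t)) = ln ((det (matrix_inv NN))\<^sup>2) + ln (det (Om t))"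
    unfolding det_Sig using dO dN by (simp add: ln_mult)
  then show ?thesis unfolding loglik_def using trace_bound[OF t] by linarith
qed

theorem unbounded: "loglik_hat D B (sample_cov n X) = \<infinity>"
proof -
  let ?S = "sample_cov n X"
  have big: "\<exists>\<Sigma>\<in>PD_G D B. c < loglik \<Sigma> ?S" for c :: real
  proof -
    define L where "L = ln ((det (matrix_inv NN))\<^sup>2)"
    define \<delta> where "\<delta> = exp (- (c + L + Bd + 1))"
    have \<delta>: "\<delta> > 0" unfolding \<delta>_def by simp
    have "continuous_on UNIV (\<lambda>t. det (Om t))" by (rule Om_cont)
    then obtain d where d: "d > 0" "\<And>t. dist t 0 < d \<Longrightarrow> dist (det (Om t)) (det (Om 0)) < \<delta>"
      unfolding continuous_on_iff using \<delta> by blast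
    define t where "t = d / 2"
    have t: "t > 0" "dist t 0 < d" using d unfolding t_def by auto
    have lt: "det (Om t) < \<delta>" using d(2)[OF t(2)] det_Om0 by (simp add: dist_real_def)
    have dO: "det (Om t) > 0" using Om_pd[OF t(1)] unfolding PD_B_def by (auto intro: pd_det_pos)
    have "ln (det (Om t)) < ln \<delta>" using lt dO by simp
    also have "ln \<delta> = - (c + L + Bd + 1)" unfolding \<delta>_def by simp
    finally have "c < - L - ln (det (Om t)) - Bd" by linarith
    also have "\<dots> \<le> loglik (Sig t) ?S" using loglik_lower[OF t(1)] unfolding L_def .
    finally show ?thesis using Sig_PD[OF t(1)] by blast
  qed
  have "(SUP \<Sigma>\<in>PD_G D B. ereal (loglik \<Sigma> ?S)) = \<top>"
    unfolding Sup_eq_top_iff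
  proof (intro allI impI)
    fix x :: ereal assume "x < \<top>"
    then obtain c where c: "x \<le> ereal c" by (cases x) auto
    obtain \<Sigma> where "\<Sigma> \<in> PD_G D B" "c < loglik \<Sigma> ?S" using big by blast
    then show "\<exists>i\<in>(\<lambda>\<Sigma>. ereal (loglik \<Sigma> ?S)) ` PD_G D B. x < i"
      using c by (intro bexI[of _ "ereal (loglik \<Sigma> ?S)"]) (auto intro: le_less_trans)
  qed
  then show ?thesis unfolding loglik_hat_def by (metis top_ereal_def)
qed

end


lemma hyperplane_null:
  fixes P :: "(real^'v::finite) measure" and w :: "real^'v"
  assumes sP: "sets P = sets borel" and ac: "absolutely_continuous lborel P" and w: "w \<noteq> 0"
  shows "{x. w \<bullet> x = 0} \<in> null_sets P"
proof -
  let ?H = "{x::real^'v. w \<bullet> x = 0}"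
  have Hb: "?H \<in> sets borel" by (rule borel_closed[OF closed_hyperplane])
  have "negligible ?H" using negligible_hyperplane[of w 0] w by simp
  then have "?H \<in> null_sets lebesgue" by (simp add: negligible_iff_null_sets)
  then have "?H \<in> null_sets lborel" using Hb null_sets_completion_iff[of ?H lborel] by simp
  then show ?thesis using ac unfolding absolutely_continuous_def by blast
qed

locale gen =
  fixes P :: "(real^'v::finite) measure" and J0 :: "'v set" and m :: nat and e :: "nat \<Rightarrow> 'v"
  assumes prob: "prob_space P" and sP: "sets P = sets borel" and ac: "absolutely_continuous lborel P"
    and bij: "bij_betw e {..<m} J0"
begin

definition "ei = inv_into {..<m} e"

definition "gm k X = (\<chi> i. if i \<in> e ` {..<k} then (\<chi> j. if j \<in> J0 then X (ei i) $ j else 0) else axis i (1::real))"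

lemma e_inj: "inj_on e {..<m}" using bij by (rule bij_betw_imp_inj_on)
lemma ei_e: "s < m \<Longrightarrow> ei (e s) = s" unfolding ei_def using e_inj by (simp add: inv_into_f_f)
lemma e_J0: "s < m \<Longrightarrow> e s \<in> J0" using bij by (auto simp: bij_betw_def)
lemma finJ0: "finite J0" using bij bij_betw_finite by blast

lemma gm0: "gm 0 X = mat 1"
  unfolding gm_def by (simp add: vec_eq_iff axis_def mat_def)

lemma meas_nth: "(\<lambda>x. x $ j) \<in> borel_measurable P"
  using borel_measurable_nth[of j] measurable_cong_sets[OF sP refl] by blast

lemma gm_meas: "k \<le> m \<Longrightarrow> (\<lambda>X. gm k X $ i $ j) \<in> borel_measurable (PiM {..<k} (\<lambda>_. P))"
proof -
  assume k: "k \<le> m"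
  show ?thesis
  proof (cases "i \<in> e ` {..<k} \<and> j \<in> J0")
    case True
    then obtain s where s: "s < k" "i = e s" by auto
    then have eis: "ei i = s" using ei_e k by simp
    have "(\<lambda>X. X s $ j) \<in> borel_measurable (PiM {..<k} (\<lambda>_. P))"
      using measurable_comp[OF measurable_component_singleton[of s "{..<k}" "\<lambda>_. P"] meas_nth[of j]] s
      by (simp add: comp_def)
    then show ?thesis using True eis unfolding gm_def by simp
  next
    case False
    then show ?thesis unfolding gm_def by (cases "i \<in> e ` {..<k}") auto
  qed
qed

lemma det_gm_meas: "k \<le> m \<Longrightarrow> (\<lambda>X. det (gm k X)) \<in> borel_measurable (PiM {..<k} (\<lambda>_. P))"
  unfolding det_def
  by (intro borel_measurable_sum borel_measurable_times borel_measurable_const borel_measurable_prod gm_meas)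

lemma gm_step:
  assumes k: "Suc k \<le> m"
  shows "\<exists>w. w $ (e k) = det (gm k X') \<and> (\<forall>y. det (gm (Suc k) (X'(k := y))) = w \<bullet> y)"
proof -
  define i0 where "i0 = e k"
  have i0: "i0 \<in> J0" unfolding i0_def using k e_J0 by simp
  have i0n: "i0 \<notin> e ` {..<k}"
  proof
    assume "i0 \<in> e ` {..<k}"
    then obtain x where "x < k" "e k = e x" unfolding i0_def by auto
    moreover have "x < m" "k < m" using \<open>x < k\<close> k by auto
    ultimately show False using e_inj unfolding inj_on_def by (metis lessThan_iff less_irrefl)
  qed
  define R where "R j = (\<chi> i. if i = i0 then axis j (1::real) else gm k X' $ i)" for j
  define w where "w = (\<chi> j. if j \<in> J0 then det (R j) else 0)"
  have Ri0: "R i0 = gm k X'"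
    unfolding R_def using i0n by (auto simp: vec_eq_iff gm_def)
  have "det (gm (Suc k) (X'(k := y))) = w \<bullet> y" for y
  proof -
    have ins: "e ` {..<Suc k} = insert i0 (e ` {..<k})" unfolding i0_def lessThan_Suc by simp
    have ein: "ei i \<noteq> k" if hi: "i \<in> e ` {..<k}" for i
    proof -
      obtain s where "s < k" "i = e s" using hi by blast
      moreover then have "ei i = s" using ei_e k by simp
      ultimately show ?thesis by simp
    qed
    have "gm (Suc k) (X'(k := y)) = (\<chi> i. if i = i0 then (\<Sum>j\<in>J0. y $ j *s axis j (1::real)) else gm k X' $ i)"
    proof -
      have r0: "(\<Sum>j\<in>J0. y $ j *s axis j (1::real)) = (\<chi> j. if j \<in> J0 then y $ j else 0)"
        by (simp add: vec_eq_iff sum_component axis_def scalar_mult_eq_scaleR finJ0 if_distrib cong: if_cong)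
      show ?thesis unfolding r0 using i0n ein ei_e k
        by (auto simp: vec_eq_iff gm_def ins i0_def)
    qed
    then have "det (gm (Suc k) (X'(k := y))) = (\<Sum>j\<in>J0. y $ j * det (R j))"
      unfolding R_def by (simp add: det_linear_row_sum[OF finJ0] det_row_mul)
    also have "\<dots> = w \<bullet> y"
    proof -
      have "w \<bullet> y = (\<Sum>j\<in>UNIV. if j \<in> J0 then y $ j * det (R j) else 0)"
        unfolding w_def inner_vec_def by (intro sum.cong) auto
      also have "\<dots> = (\<Sum>j\<in>UNIV \<inter> J0. y $ j * det (R j))" by (rule sum.inter_restrict[symmetric]) simp
      finally show ?thesis by simp
    qed
    finally show ?thesis .
  qed
  moreover have "w $ (e k) = det (gm k X')" unfolding w_def using i0 Ri0 by (simp add: i0_def)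
  ultimately show ?thesis by blast
qed

end


context gen begin

lemma gm_AE: "k \<le> m \<Longrightarrow> AE X in PiM {..<k} (\<lambda>_. P). det (gm k X) \<noteq> 0"
proof (induction k)
  case 0
  then show ?case by (simp add: gm0)
next
  case (Suc k)
  have km: "k \<le> m" "Suc k \<le> m" using Suc.prems by auto
  interpret pps: product_prob_space "\<lambda>_::nat. P"
    using prob by (simp add: product_prob_space_def product_prob_space_axioms_def product_sigma_finite_def prob_space_imp_sigma_finite)
  let ?M = "PiM {..<Suc k} (\<lambda>_. P)"
  define N where "N = {X \<in> space ?M. det (gm (Suc k) X) = 0}"
  have Nsets: "N \<in> sets ?M"
  proof -
    have "(\<lambda>X. det (gm (Suc k) X)) -` {0} \<inter> space ?M \<in> sets ?M"
      by (rule measurable_sets[OF det_gm_meas[OF km(2)]]) simp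
    moreover have "N = (\<lambda>X. det (gm (Suc k) X)) -` {0} \<inter> space ?M" unfolding N_def by auto
    ultimately show ?thesis by simp
  qed
  have inner: "(\<integral>\<^sup>+ y. indicator N (X'(k := y)) \<partial>P) = 0" if X': "det (gm k X') \<noteq> 0" for X'
  proof -
    obtain w where w: "w $ (e k) = det (gm k X')" "\<And>y. det (gm (Suc k) (X'(k := y))) = w \<bullet> y"
      using gm_step[OF km(2)] by blast
    have wnz: "w \<noteq> 0" using w(1) X' by auto
    let ?H = "{y. w \<bullet> y = 0}"
    have Hnull: "?H \<in> null_sets P" by (rule hyperplane_null[OF sP ac wnz])
    have "(\<integral>\<^sup>+ y. indicator N (X'(k := y)) \<partial>P) \<le> (\<integral>\<^sup>+ y. indicator ?H y \<partial>P)"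
      by (rule nn_integral_mono) (auto simp: N_def w(2) split: split_indicator)
    also have "\<dots> = emeasure P ?H" using Hnull by (simp add: null_setsD2)
    also have "\<dots> = 0" using Hnull by (rule null_setsD1)
    finally show ?thesis by simp
  qed
  have "emeasure ?M N = (\<integral>\<^sup>+ X. indicator N X \<partial>?M)" using Nsets by simp
  also have "\<dots> = (\<integral>\<^sup>+ X'. (\<integral>\<^sup>+ y. indicator N (X'(k := y)) \<partial>P) \<partial>PiM {..<k} (\<lambda>_. P))"
  proof -
    have "{..<Suc k} = insert k {..<k}" by auto
    moreover have "indicator N \<in> borel_measurable (PiM (insert k {..<k}) (\<lambda>_. P))"
      using Nsets \<open>{..<Suc k} = insert k {..<k}\<close> by simp
    ultimately show ?thesis using pps.product_nn_integral_insert[of "{..<k}" k "indicator N"] by simp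
  qed
  also have "\<dots> = (\<integral>\<^sup>+ X'. 0 \<partial>PiM {..<k} (\<lambda>_. P))"
    by (rule nn_integral_cong_AE) (use Suc.IH[OF km(1)] inner in \<open>auto elim: AE_mp\<close>)
  also have "\<dots> = 0" by simp
  finally have "emeasure ?M N = 0" .
  then show ?case
    using AE_iff_measurable[OF Nsets] unfolding N_def by auto
qed

end


context gen begin

lemma gm_solve:
  assumes d: "det (gm m X) \<noteq> 0"
  shows "\<exists>\<beta>. \<forall>s<m. (\<Sum>l\<in>J0. \<beta> l * X s $ l) = X s $ j"
proof -
  define G where "G = gm m X"
  have iG: "invertible G" using d invertible_det_nz unfolding G_def by blast
  define b where "b = (\<chi> i. if i \<in> J0 then X (ei i) $ j else 0)"
  define \<beta> where "\<beta> = matrix_inv G *v b"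
  have Gb: "G *v \<beta> = b" unfolding \<beta>_def
    using matrix_inv_props(1)[OF iG] by (simp add: matrix_vector_mul_assoc)
  have "(\<Sum>l\<in>J0. \<beta> $ l * X s $ l) = X s $ j" if s: "s < m" for s
  proof -
    have es: "e s \<in> e ` {..<m}" "ei (e s) = s" "e s \<in> J0" using s ei_e e_J0 by auto
    have "(G *v \<beta>) $ (e s) = (\<Sum>l\<in>UNIV. if l \<in> J0 then \<beta> $ l * X s $ l else 0)"
      unfolding matrix_vector_mult_def G_def gm_def using es by simp (intro sum.cong, auto)
    also have "\<dots> = (\<Sum>l\<in>UNIV \<inter> J0. \<beta> $ l * X s $ l)" by (rule sum.inter_restrict[symmetric]) simp
    finally have "(G *v \<beta>) $ (e s) = (\<Sum>l\<in>J0. \<beta> $ l * X s $ l)" by simp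
    moreover have "(G *v \<beta>) $ (e s) = X s $ j" unfolding Gb b_def using es by simp
    ultimately show ?thesis by simp
  qed
  then show ?thesis by blast
qed

end

lemma combine:
  fixes W :: "('v \<Rightarrow> real) set"
  assumes fin: "finite S" and zero: "(\<lambda>_. 0) \<in> W"
    and lin: "\<And>g1 g2 c. g1 \<in> W \<Longrightarrow> g2 \<in> W \<Longrightarrow> (\<lambda>l. g1 l + c * g2 l) \<in> W"
    and ex: "\<And>j. j \<in> S \<Longrightarrow> \<exists>g\<in>W. g j \<noteq> 0"
  shows "\<exists>g\<in>W. \<forall>j\<in>S. g j \<noteq> 0"
  using fin ex
proof (induction S rule: finite_induct)
  case empty then show ?case using zero by blast
next
  case (insert j S)
  obtain g where g: "g \<in> W" "\<forall>i\<in>S. g i \<noteq> 0" using insert by blast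
  obtain h where h: "h \<in> W" "h j \<noteq> 0" using insert.prems by blast
  show ?case
  proof (cases "g j = 0")
    case False then show ?thesis using g by blast
  next
    case True
    have "finite (insert 0 ((\<lambda>i. - g i / h i) ` S))" using insert by simp
    then obtain c :: real where c: "c \<notin> insert 0 ((\<lambda>i. - g i / h i) ` S)"
      using ex_new_if_finite[OF infinite_UNIV_char_0] by blast
    define g' where "g' = (\<lambda>l. g l + c * h l)"
    have "g' \<in> W" unfolding g'_def by (rule lin[OF g(1) h(1)])
    moreover have "g' j \<noteq> 0" using True c h by (simp add: g'_def)
    moreover have "g' i \<noteq> 0" if i: "i \<in> S" for i
    proof
      assume "g' i = 0"
      then have e: "g i + c * h i = 0" unfolding g'_def .
      show False
      proof (cases "h i = 0")
        case True then show False using e g i by simp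
      next
        case False
        then have "c = - g i / h i" using e by (simp add: field_simps)
        then show False using c i by auto
      qed
    qed
    ultimately show ?thesis by blast
  qed
qed


context gen begin
lemma gen_AE: "AE X in PiM {..<m} (\<lambda>_. P). \<forall>j. \<exists>\<beta>. \<forall>s<m. (\<Sum>l\<in>J0. \<beta> l * X s $ l) = X s $ j"
  using gm_AE[of m] by (rule AE_mp) (auto intro: gm_solve)
end

lemma part2:
  fixes D :: "('v::finite \<times> 'v) set" and B :: "'v set set" and P :: "(real^'v) measure"
  assumes prob: "prob_space P" and sP: "sets P = sets borel" and ac: "absolutely_continuous lborel P"
    and n: "n < Max ((\<lambda>C. card (Pa D C)) ` bidir_components B)"
  shows "AE X in iid_sample n P. loglik_hat D B (sample_cov n X) = \<infinity>"
proof -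
  let ?r = "(bidir_rel B)\<^sup>*"
  have fin: "finite (bidir_components B)" by (rule finite_subset[of _ "Pow UNIV"]) auto
  have ne: "bidir_components B \<noteq> {}" unfolding bidir_components_def quotient_def by auto
  obtain C where C: "C \<in> bidir_components B" "card (Pa D C) = Max ((\<lambda>C. card (Pa D C)) ` bidir_components B)"
  proof -
    have "Max ((\<lambda>C. card (Pa D C)) ` bidir_components B) \<in> (\<lambda>C. card (Pa D C)) ` bidir_components B"
      by (rule Max_in) (use fin ne in auto)
    then show ?thesis using that by auto
  qed
  have nC: "n < card (Pa D C)" using n C(2) by simp
  have CPa: "C \<subseteq> Pa D C" unfolding Pa_def by auto
  have finC: "finite C" by simp
  have "\<forall>j\<in>C. \<exists>J e. J \<subseteq> Pa D C - {j} \<and> bij_betw e {..<n} J"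
  proof
    fix j assume j: "j \<in> C"
    have "card (Pa D C - {j}) = card (Pa D C) - 1" using j CPa by (simp add: card_Diff_singleton subset_iff)
    then have "n \<le> card (Pa D C - {j})" using nC by simp
    then obtain J where J: "J \<subseteq> Pa D C - {j}" "card J = n" "finite J" by (rule obtain_subset_with_card_n)
    obtain e where "bij_betw e {0..<card J} J" using ex_bij_betw_nat_finite[OF J(3)] by blast
    then have "bij_betw e {..<n} J" using J(2) by (simp add: atLeast0LessThan)
    then show "\<exists>J e. J \<subseteq> Pa D C - {j} \<and> bij_betw e {..<n} J" using J(1) by blast
  qed
  then obtain JJ EE where JE: "\<And>j. j \<in> C \<Longrightarrow> JJ j \<subseteq> Pa D C - {j} \<and> bij_betw (EE j) {..<n} (JJ j)"
    by metis
  have "AE X in PiM {..<n} (\<lambda>_. P). \<forall>j\<in>C. \<forall>j'. \<exists>\<beta>. \<forall>s<n. (\<Sum>l\<in>JJ j. \<beta> l * X s $ l) = X s $ j'"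
  proof (rule AE_finite_allI[OF finC])
    fix j assume j: "j \<in> C"
    interpret g: gen P "JJ j" n "EE j"
      by (intro gen.intro prob sP ac) (use JE[OF j] in blast)
    show "AE X in PiM {..<n} (\<lambda>_. P). \<forall>j'. \<exists>\<beta>. \<forall>s<n. (\<Sum>l\<in>JJ j. \<beta> l * X s $ l) = X s $ j'"
      by (rule g.gen_AE)
  qed
  then show ?thesis unfolding iid_sample_def
  proof (rule AE_mp, intro AE_I2 impI)
    fix X :: "nat \<Rightarrow> real^'v"
    assume H: "\<forall>j\<in>C. \<forall>j'. \<exists>\<beta>. \<forall>s<n. (\<Sum>l\<in>JJ j. \<beta> l * X s $ l) = X s $ j'"
    define W where "W = {g :: 'v \<Rightarrow> real. (\<forall>l. l \<notin> Pa D C \<longrightarrow> g l = 0) \<and> (\<forall>s<n. (\<chi> l. g l) \<bullet> X s = 0)}"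
    have zero: "(\<lambda>_. 0) \<in> W" unfolding W_def by (simp add: zero_vec_def[symmetric])
    have lin: "(\<lambda>l. g1 l + c * g2 l) \<in> W" if "g1 \<in> W" "g2 \<in> W" for g1 g2 c
    proof -
      have "(\<chi> l. g1 l + c * g2 l) = (\<chi> l. g1 l) + c *\<^sub>R (\<chi> l. g2 l)" by (simp add: vec_eq_iff)
      then show ?thesis using that unfolding W_def by (simp add: inner_add_left)
    qed
    have ex: "\<exists>g\<in>W. g j \<noteq> 0" if j: "j \<in> C" for j
    proof -
      obtain \<beta> where \<beta>: "\<And>s. s < n \<Longrightarrow> (\<Sum>l\<in>JJ j. \<beta> l * X s $ l) = X s $ j" using H j by blast
      have JJ: "JJ j \<subseteq> Pa D C - {j}" using JE[OF j] by blast
      define g where "g l = (if l = j then 1 else 0) - (if l \<in> JJ j then \<beta> l else 0)" for l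
      have "g \<in> W" unfolding W_def
      proof (intro CollectI conjI allI impI)
        fix l assume "l \<notin> Pa D C"
        then show "g l = 0" using JJ j CPa unfolding g_def by auto
      next
        fix s assume s: "s < n"
        have "(\<chi> l. g l) \<bullet> X s = (\<Sum>l\<in>UNIV. (if l = j then X s $ l else 0) - (if l \<in> JJ j then \<beta> l * X s $ l else 0))"
          unfolding inner_vec_def g_def by (intro sum.cong) (auto simp: left_diff_distrib)
        also have "\<dots> = X s $ j - (\<Sum>l\<in>UNIV. if l \<in> JJ j then \<beta> l * X s $ l else 0)"
          by (simp add: sum_subtractf)
        also have "\<dots> = X s $ j - (\<Sum>l\<in>UNIV \<inter> JJ j. \<beta> l * X s $ l)"
          by (subst sum.inter_restrict) simp_all
        also have "\<dots> = 0" using \<beta>[OF s] by simp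
        finally show "(\<chi> l. g l) \<bullet> X s = 0" .
      qed
      moreover have "g j \<noteq> 0" using JJ unfolding g_def by auto
      ultimately show ?thesis by blast
    qed
    obtain \<alpha> where \<alpha>: "\<alpha> \<in> W" "\<forall>j\<in>C. \<alpha> j \<noteq> 0" using combine[OF finC zero lin ex] by blast
    have aW: "\<forall>l. l \<notin> Pa D C \<longrightarrow> \<alpha> l = 0" "\<forall>s<n. (\<chi> l. \<alpha> l) \<bullet> X s = 0"
      using \<alpha>(1) unfolding W_def by auto
    interpret u: unb D B C \<alpha> n X
    proof (rule unb.intro)
      show "C \<in> bidir_components B" by (rule C(1))
      show "\<And>j. j \<in> C \<Longrightarrow> \<alpha> j \<noteq> 0" using \<alpha>(2) by blast
      show "\<And>j. j \<notin> Pa D C \<Longrightarrow> \<alpha> j = 0" using aW(1) by blast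
      show "\<And>s. s < n \<Longrightarrow> (\<chi> l. \<alpha> l) \<bullet> X s = 0" using aW(2) by blast
    qed
    show "loglik_hat D B (sample_cov n X) = \<infinity>" by (rule u.unbounded)
  qed
qed

theorem theorem8:
  fixes D :: "('v::finite \<times> 'v) set" and B :: "'v set set" and P :: "(real^'v) measure"
  assumes "mixed_graph D B"
    and "prob_space P" and "sets P = sets borel" and "absolutely_continuous lborel P"
  shows "(\<forall>N\<in>tau_set D B P. N \<ge> Max ((\<lambda>C. card (Pa D C)) ` bidir_components B))
    \<and> (\<forall>n::nat. n \<ge> 1 \<and> n < Max ((\<lambda>C. card (Pa D C)) ` bidir_components B) \<longrightarrow>
         (AE X in iid_sample n P. loglik_hat D B (sample_cov n X) = \<infinity>))"
proof (intro conjI allI impI ballI)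
  fix n :: nat assume "1 \<le> n \<and> n < Max ((\<lambda>C. card (Pa D C)) ` bidir_components B)"
  then show "AE X in iid_sample n P. loglik_hat D B (sample_cov n X) = \<infinity>"
    using part2[OF assms(2-4)] by blast
next
  fix N assume N: "N \<in> tau_set D B P"
  show "N \<ge> Max ((\<lambda>C. card (Pa D C)) ` bidir_components B)"
  proof (rule ccontr)
    assume "\<not> ?thesis"
    then have lt: "N < Max ((\<lambda>C. card (Pa D C)) ` bidir_components B)" by simp
    have a1: "AE X in iid_sample N P. loglik_hat D B (sample_cov N X) < \<infinity>"
      using N unfolding tau_set_def by auto
    have a2: "AE X in iid_sample N P. loglik_hat D B (sample_cov N X) = \<infinity>"
      using part2[OF assms(2-4) lt] .
    have "AE X in iid_sample N P. False" using a1 a2 by eventually_elim simp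
    moreover have "prob_space (iid_sample N P)"
      unfolding iid_sample_def by (rule prob_space_PiM) (use assms(2) in simp)
    ultimately show False using prob_space.AE_False by blast
  qed
qed


end
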